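(* Let $Y\subset\mathbb{R}^n$ be open, and let $\omega\colon Y\to\mathbb{R}^n$, $f\colon Y\to\mathbb{R}^n$, $F\colon Y\to\mathbb{R}$, $H\colon Y\to\mathbb{R}^{n\times m}$, $g\colon Y\to\mathbb{R}^m$, $f^{\mathrm{num}}\colon Y\times Y\to\mathbb{R}^n$, $H^{\mathrm{num}}\colon Y\times Y\to\mathbb{R}^{n\times m}$, $(Hg)^{\mathrm{num}}\colon Y\times Y\to\mathbb{R}^n$ be arbitrary with $f^{\mathrm{num}}(u,u)=f(u)$, $H^{\mathrm{num}}(u,u)=H(u)$, $(Hg)^{\mathrm{num}}(u,u)=H(u)g(u)$. Then the following are equivalent: (A) there exists $F^{\mathrm{num}}\colon Y\times Y\to\mathbb{R}$ with $F^{\mathrm{num}}(u,u)=F(u)$ such that for all $u_-,u_0,u_+\in Y$, $$\omega(u_0)\cdot\Big(f^{\mathrm{num}}(u_0,u_+)-f^{\mathrm{num}}(u_-,u_0)+(Hg)^{\mathrm{num}}(u_0,u_+)-(Hg)^{\mathrm{num}}(u_-,u_0)-H^{\mathrm{num}}(u_0,u_+)g(u_0)+H^{\mathrm{num}}(u_-,u_0)g(u_0)\Big)\ \ge\ F^{\mathrm{num}}(u_0,u_+)-F^{\mathrm{num}}(u_-,u_0);$$ (B) for all $u_-,u_+\in Y$, $$[\![\omega]\!]\cdot f^{\mathrm{num}}+[\![\omega]\!]\cdot (Hg)^{\mathrm{num}}-\omega(u_+)\cdot H^{\mathrm{num}}g(u_+)+\omega(u_-)\cdot H^{\mathrm{num}}g(u_-)\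 \le\ [\![\omega\cdot f-F]\!],$$ with all numerical fluxes evaluated at $(u_-,u_+)$. Moreover, there exists a consistent $F^{\mathrm{num}}$ with equality in (A) for all triples iff (B) holds with equality for all pairs, and then $$F^{\mathrm{num}}=\{\{F\}\}+\{\{\omega\}\}\cdot f^{\mathrm{num}}-\{\{\omega\cdot f\}\}+\{\{\omega\}\}\cdot(Hg)^{\mathrm{num}}-\tfrac12\omega(u_+)\cdot H^{\mathrm{num}}g(u_+)-\tfrac12\omega(u_-)\cdot H^{\mathrm{num}}g(u_-).$$
   Context: For a function $a$ on $Y$ and states $u_\pm$: $\{\{a\}\}=\tfrac12(a(u_-)+a(u_+))$, $[\![a]\!]=a(u_+)-a(u_-)$. *)

theory Defs
  imports "HOL-Analysis.Analysis"
begin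

definition avg :: "('a \<Rightarrow> 'b::real_vector) \<Rightarrow> 'a \<Rightarrow> 'a \<Rightarrow> 'b" where
  "avg a um up = (1/2) *\<^sub>R (a um + a up)"

definition jump :: "('a \<Rightarrow> 'b::real_vector) \<Rightarrow> 'a \<Rightarrow> 'a \<Rightarrow> 'b" where
  "jump a um up = a up - a um"

end

theory Submission
  imports Defs
begin

theorem mainTheorem7:
  fixes Y :: "(real^'n) set"
    and \<omega> f :: "real^'n \<Rightarrow> real^'n"
    and F :: "real^'n \<Rightarrow> real"
    and H :: "real^'n \<Rightarrow> real^'m^'n"
    and g :: "real^'n \<Rightarrow> real^'m"
    and fnum :: "real^'n \<Rightarrow> real^'n \<Rightarrow> real^'n"
    and Hnum :: "real^'n \<Rightarrow> real^'n \<Rightarrow> real^'m^'n"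
    and Hgnum :: "real^'n \<Rightarrow> real^'n \<Rightarrow> real^'n"
  assumes "open Y"
    and fnum_cons: "\<And>u. u \<in> Y \<Longrightarrow> fnum u u = f u"
    and Hnum_cons: "\<And>u. u \<in> Y \<Longrightarrow> Hnum u u = H u"
    and Hgnum_cons: "\<And>u. u \<in> Y \<Longrightarrow> Hgnum u u = H u *v g u"
  shows
   "((\<exists>Fnum :: real^'n \<Rightarrow> real^'n \<Rightarrow> real.
        (\<forall>u\<in>Y. Fnum u u = F u) \<and>
        (\<forall>um\<in>Y. \<forall>u0\<in>Y. \<forall>up\<in>Y.
           \<omega> u0 \<bullet> (fnum u0 up - fnum um u0 + Hgnum u0 up - Hgnum um u0
                     - Hnum u0 up *v g u0 + Hnum um u0 *v g u0)
           \<ge> Fnum u0 up - Fnum um u0))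
     \<longleftrightarrow>
     (\<forall>um\<in>Y. \<forall>up\<in>Y.
        jump \<omega> um up \<bullet> fnum um up + jump \<omega> um up \<bullet> Hgnum um up
        - \<omega> up \<bullet> (Hnum um up *v g up) + \<omega> um \<bullet> (Hnum um up *v g um)
        \<le> jump (\<lambda>u. \<omega> u \<bullet> f u - F u) um up))
   \<and>
   ((\<exists>Fnum :: real^'n \<Rightarrow> real^'n \<Rightarrow> real.
        (\<forall>u\<in>Y. Fnum u u = F u) \<and>
        (\<forall>um\<in>Y. \<forall>u0\<in>Y. \<forall>up\<in>Y.
           \<omega> u0 \<bullet> (fnum u0 up - fnum um u0 + Hgnum u0 up - Hgnum um u0
                     - Hnum u0 up *v g u0 + Hnum um u0 *v g u0)
           = Fnum u0 up - Fnum um u0))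
     \<longleftrightarrow>
     (\<forall>um\<in>Y. \<forall>up\<in>Y.
        jump \<omega> um up \<bullet> fnum um up + jump \<omega> um up \<bullet> Hgnum um up
        - \<omega> up \<bullet> (Hnum um up *v g up) + \<omega> um \<bullet> (Hnum um up *v g um)
        = jump (\<lambda>u. \<omega> u \<bullet> f u - F u) um up))
   \<and>
   (\<forall>Fnum :: real^'n \<Rightarrow> real^'n \<Rightarrow> real.
        (\<forall>u\<in>Y. Fnum u u = F u) \<and>
        (\<forall>um\<in>Y. \<forall>u0\<in>Y. \<forall>up\<in>Y.
           \<omega> u0 \<bullet> (fnum u0 up - fnum um u0 + Hgnum u0 up - Hgnum um u0
                     - Hnum u0 up *v g u0 + Hnum um u0 *v g u0)
           = Fnum u0 up - Fnum um u0)
        \<longrightarrow>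
        (\<forall>um\<in>Y. \<forall>up\<in>Y.
           Fnum um up = avg F um up + avg \<omega> um up \<bullet> fnum um up
             - avg (\<lambda>u. \<omega> u \<bullet> f u) um up + avg \<omega> um up \<bullet> Hgnum um up
             - (1/2) * (\<omega> up \<bullet> (Hnum um up *v g up))
             - (1/2) * (\<omega> um \<bullet> (Hnum um up *v g um))))"
proof -
  define D where "D um u0 up = \<omega> u0 \<bullet> (fnum u0 up - fnum um u0 + Hgnum u0 up - Hgnum um u0
                     - Hnum u0 up *v g u0 + Hnum um u0 *v g u0)" for um u0 up
  define S where "S = (\<lambda>um up. jump (\<lambda>u. \<omega> u \<bullet> f u - F u) um up - (jump \<omega> um up \<bullet> fnum um up + jump \<omega> um up \<bullet> Hgnum um up
        - \<omega> up \<bullet> (Hnum um up *v g up) + \<omega> um \<bullet> (Hnum um up *v g um)))"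
  define Fn where "Fn = (\<lambda>a b. \<omega> a \<bullet> (fnum a b + Hgnum a b - Hnum a b *v g a) - \<omega> a \<bullet> f a + F a)"
  have Fn_cons: "\<forall>u\<in>Y. Fn u u = F u"
    using fnum_cons Hgnum_cons Hnum_cons by (simp add: Fn_def)
  have k1: "D a u0 b - (Fn u0 b - Fn a u0) = S a u0" for a u0 b
    unfolding D_def Fn_def S_def jump_def
    by (simp add: inner_diff_right inner_add_right inner_diff_left inner_add_left)
  have k2: "(D a a b - (Fnum a b - Fnum a a)) + (D a b b - (Fnum b b - Fnum a b)) = S a b"
    if "a \<in> Y" "b \<in> Y" "\<forall>u\<in>Y. Fnum u u = F u" for a b and Fnum :: "real^'n \<Rightarrow> real^'n \<Rightarrow> real"
    using that fnum_cons Hgnum_cons Hnum_cons unfolding D_def S_def jump_def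
    by (simp add: inner_diff_right inner_add_right inner_diff_left inner_add_left)
  have k3: "Fnum a b = avg F a b + avg \<omega> a b \<bullet> fnum a b
             - avg (\<lambda>u. \<omega> u \<bullet> f u) a b + avg \<omega> a b \<bullet> Hgnum a b
             - (1/2) * (\<omega> b \<bullet> (Hnum a b *v g b))
             - (1/2) * (\<omega> a \<bullet> (Hnum a b *v g a))"
    if "a \<in> Y" "b \<in> Y" "\<forall>u\<in>Y. Fnum u u = F u" "D a a b = Fnum a b - Fnum a a"
       "D a b b = Fnum b b - Fnum a b" for a b and Fnum :: "real^'n \<Rightarrow> real^'n \<Rightarrow> real"
    using that fnum_cons Hgnum_cons Hnum_cons unfolding D_def avg_def
    apply (simp add: inner_diff_right inner_add_right inner_diff_left inner_add_left algebra_simps)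
    by (simp add: field_simps)
  have P1: ?thesis
    unfolding D_def[symmetric]
    apply (intro conjI)
    subgoal
    proof
      assume "\<exists>Fnum. (\<forall>u\<in>Y. Fnum u u = F u) \<and> (\<forall>um\<in>Y. \<forall>u0\<in>Y. \<forall>up\<in>Y. D um u0 up \<ge> Fnum u0 up - Fnum um u0)"
      then obtain Fnum where c: "\<forall>u\<in>Y. Fnum u u = F u" and h: "\<forall>um\<in>Y. \<forall>u0\<in>Y. \<forall>up\<in>Y. D um u0 up \<ge> Fnum u0 up - Fnum um u0" by blast
      show "\<forall>um\<in>Y. \<forall>up\<in>Y. jump \<omega> um up \<bullet> fnum um up + jump \<omega> um up \<bullet> Hgnum um up
        - \<omega> up \<bullet> (Hnum um up *v g up) + \<omega> um \<bullet> (Hnum um up *v g um)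
        \<le> jump (\<lambda>u. \<omega> u \<bullet> f u - F u) um up"
      proof (intro ballI)
        fix a b assume ab: "a \<in> Y" "b \<in> Y"
        have "S a b \<ge> 0" using k2[of a b Fnum, OF ab c] h[rule_format, of a a b] h[rule_format, of a b b] ab by linarith
        thus "jump \<omega> a b \<bullet> fnum a b + jump \<omega> a b \<bullet> Hgnum a b
        - \<omega> b \<bullet> (Hnum a b *v g b) + \<omega> a \<bullet> (Hnum a b *v g a)
        \<le> jump (\<lambda>u. \<omega> u \<bullet> f u - F u) a b" by (simp add: S_def)
      qed
    next
      assume B: "\<forall>um\<in>Y. \<forall>up\<in>Y. jump \<omega> um up \<bullet> fnum um up + jump \<omega> um up \<bullet> Hgnum um up
        - \<omega> up \<bullet> (Hnum um up *v g up) + \<omega> um \<bullet> (Hnum um up *v g um)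
        \<le> jump (\<lambda>u. \<omega> u \<bullet> f u - F u) um up"
      have "\<forall>um\<in>Y. \<forall>u0\<in>Y. \<forall>up\<in>Y. D um u0 up \<ge> Fn u0 up - Fn um u0"
      proof (intro ballI)
        fix a u0 b assume "a \<in> Y" "u0 \<in> Y" "b \<in> Y"
        then have "S a u0 \<ge> 0" using B by (simp add: S_def)
        thus "D a u0 b \<ge> Fn u0 b - Fn a u0" using k1[of a u0 b] by linarith
      qed
      with Fn_cons show "\<exists>Fnum. (\<forall>u\<in>Y. Fnum u u = F u) \<and> (\<forall>um\<in>Y. \<forall>u0\<in>Y. \<forall>up\<in>Y. D um u0 up \<ge> Fnum u0 up - Fnum um u0)" by blast
    qed
    subgoal
    proof
      assume "\<exists>Fnum. (\<forall>u\<in>Y. Fnum u u = F u) \<and> (\<forall>um\<in>Y. \<forall>u0\<in>Y. \<forall>up\<in>Y. D um u0 up = Fnum u0 up - Fnum um u0)"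
      then obtain Fnum where c: "\<forall>u\<in>Y. Fnum u u = F u" and h: "\<forall>um\<in>Y. \<forall>u0\<in>Y. \<forall>up\<in>Y. D um u0 up = Fnum u0 up - Fnum um u0" by blast
      show "\<forall>um\<in>Y. \<forall>up\<in>Y. jump \<omega> um up \<bullet> fnum um up + jump \<omega> um up \<bullet> Hgnum um up
        - \<omega> up \<bullet> (Hnum um up *v g up) + \<omega> um \<bullet> (Hnum um up *v g um)
        = jump (\<lambda>u. \<omega> u \<bullet> f u - F u) um up"
      proof (intro ballI)
        fix a b assume ab: "a \<in> Y" "b \<in> Y"
        have "S a b = 0" using k2[of a b Fnum, OF ab c] h[rule_format, of a a b] h[rule_format, of a b b] ab by linarith
        thus "jump \<omega> a b \<bullet> fnum a b + jump \<omega> a b \<bullet> Hgnum a b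
        - \<omega> b \<bullet> (Hnum a b *v g b) + \<omega> a \<bullet> (Hnum a b *v g a)
        = jump (\<lambda>u. \<omega> u \<bullet> f u - F u) a b" by (simp add: S_def)
      qed
    next
      assume B: "\<forall>um\<in>Y. \<forall>up\<in>Y. jump \<omega> um up \<bullet> fnum um up + jump \<omega> um up \<bullet> Hgnum um up
        - \<omega> up \<bullet> (Hnum um up *v g up) + \<omega> um \<bullet> (Hnum um up *v g um)
        = jump (\<lambda>u. \<omega> u \<bullet> f u - F u) um up"
      have "\<forall>um\<in>Y. \<forall>u0\<in>Y. \<forall>up\<in>Y. D um u0 up = Fn u0 up - Fn um u0"
      proof (intro ballI)
        fix a u0 b assume "a \<in> Y" "u0 \<in> Y" "b \<in> Y"
        then have "S a u0 = 0" using B by (simp add: S_def)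
        thus "D a u0 b = Fn u0 b - Fn a u0" using k1[of a u0 b] by linarith
      qed
      with Fn_cons show "\<exists>Fnum. (\<forall>u\<in>Y. Fnum u u = F u) \<and> (\<forall>um\<in>Y. \<forall>u0\<in>Y. \<forall>up\<in>Y. D um u0 up = Fnum u0 up - Fnum um u0)" by blast
    qed
    subgoal
    proof (intro allI impI ballI)
      fix Fnum :: "real^'n \<Rightarrow> real^'n \<Rightarrow> real" and a b
      assume h: "(\<forall>u\<in>Y. Fnum u u = F u) \<and> (\<forall>um\<in>Y. \<forall>u0\<in>Y. \<forall>up\<in>Y. D um u0 up = Fnum u0 up - Fnum um u0)"
        and ab: "a \<in> Y" "b \<in> Y"
      show "Fnum a b = avg F a b + avg \<omega> a b \<bullet> fnum a b
             - avg (\<lambda>u. \<omega> u \<bullet> f u) a b + avg \<omega> a b \<bullet> Hgnum a b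
             - (1/2) * (\<omega> b \<bullet> (Hnum a b *v g b))
             - (1/2) * (\<omega> a \<bullet> (Hnum a b *v g a))"
        using k3[of a b Fnum, OF ab] h ab by blast
    qed
    done
  then show ?thesis .
qed

end
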